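(* Let $R$ be a commutative ring with $1$, $A\in M_n(R)$ and $B=\mathrm{diag}(b_1,\dots,b_n)$ with $b_i\in R$. Then $$T(A,B)=(-1)^{\lfloor n/2\rfloor}\,\Delta(A)\,\delta(b_1,\dots,b_n)^n.$$
   Context: $M(A,B)\in M_{n^2}(R)$ is the block matrix of $n\times n$ blocks whose $(i,j)$-th block is $A^{j-1}B^{i-1}$ ($i,j=1,\dots,n$), and $T(A,B)=\det M(A,B)$. For $A\in M_n(R)$ and $t\in\{1,\dots,n\}$, $M_t(A)$ is the $n\times n$ matrix whose $j$-th column is the $t$-th column of $A^{j-1}$ ($j=1,\dots,n$, $A^0=I$); $\Delta_t(A)=\det M_t(A)$ and $\Delta(A)=\prod_{t=1}^n\Delta_t(A)$. $\delta(x_1,\dots,x_n)=\prod_{s<t}(x_t-x_s)$ is the Vandermonde determinant. *)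

theory Defs
  imports "Jordan_Normal_Form.Determinant"
begin

text \<open>All indices are 0-based: paper index i (1..n) corresponds to i-1 here.\<close>

text \<open>M(A,B): the n^2 x n^2 block matrix whose (i,j) block (0-based) is A^j * B^i.\<close>
definition blockM :: "nat \<Rightarrow> 'a::comm_ring_1 mat \<Rightarrow> 'a mat \<Rightarrow> 'a mat" where
  "blockM n A B = mat (n * n) (n * n)
     (\<lambda>(r, c). ((A ^\<^sub>m (c div n)) * (B ^\<^sub>m (r div n))) $$ (r mod n, c mod n))"

definition T :: "nat \<Rightarrow> 'a::comm_ring_1 mat \<Rightarrow> 'a mat \<Rightarrow> 'a" where
  "T n A B = det (blockM n A B)"

definition Mt :: "nat \<Rightarrow> 'a::comm_ring_1 mat \<Rightarrow> nat \<Rightarrow> 'a mat" where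
  "Mt n A t = mat n n (\<lambda>(p, j). (A ^\<^sub>m j) $$ (p, t))"

definition Delta_t :: "nat \<Rightarrow> 'a::comm_ring_1 mat \<Rightarrow> nat \<Rightarrow> 'a" where
  "Delta_t n A t = det (Mt n A t)"

definition Delta :: "nat \<Rightarrow> 'a::comm_ring_1 mat \<Rightarrow> 'a" where
  "Delta n A = (\<Prod>t<n. Delta_t n A t)"

definition vdm :: "nat \<Rightarrow> (nat \<Rightarrow> 'a::comm_ring_1) \<Rightarrow> 'a" where
  "vdm n x = (\<Prod>t<n. \<Prod>s<t. x t - x s)"

definition diagm :: "nat \<Rightarrow> (nat \<Rightarrow> 'a::comm_ring_1) \<Rightarrow> 'a mat" where
  "diagm n b = mat n n (\<lambda>(i, j). if i = j then b i else 0)"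

end

theory Submission
  imports Defs
begin

lemma det_permute_cols:
  fixes X :: "'a::comm_ring_1 mat"
  assumes X: "X \<in> carrier_mat N N" and p: "p permutes {0..<N}"
  shows "det (mat N N (\<lambda>(i,j). X $$ (i, p j))) = signof p * det X"
proof -
  have "mat N N (\<lambda>(i,j). X $$ (i, p j)) = transpose_mat (mat N N (\<lambda>(i,j). transpose_mat X $$ (p i, j)))"
    using X p by (intro eq_matI) (auto simp: permutes_in_image)
  hence "det (mat N N (\<lambda>(i,j). X $$ (i, p j))) = det (mat N N (\<lambda>(i,j). transpose_mat X $$ (p i, j)))"
    by (metis det_transpose mat_carrier)
  also have "\<dots> = signof p * det (transpose_mat X)"
    by (rule det_permute_rows[OF _ p]) (use X in auto)
  finally show ?thesis using X by (simp add: det_transpose)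
qed

lemma det_conj_perm:
  fixes X :: "'a::comm_ring_1 mat"
  assumes X: "X \<in> carrier_mat N N" and p: "p permutes {0..<N}"
  shows "det (mat N N (\<lambda>(i,j). X $$ (p i, p j))) = det X"
proof -
  let ?Y = "mat N N (\<lambda>(i,j). X $$ (i, p j))"
  have "mat N N (\<lambda>(i,j). X $$ (p i, p j)) = mat N N (\<lambda>(i,j). ?Y $$ (p i, j))"
    using X p by (intro eq_matI) (auto simp: permutes_in_image)
  also have "det \<dots> = signof p * det ?Y" by (rule det_permute_rows[OF _ p]) auto
  also have "\<dots> = signof p * signof p * det X" using det_permute_cols[OF X p] by simp
  finally show ?thesis by (metis mult_1 of_int_1 of_int_mult sign_idempotent)
qed

lemma det_block_lower:
  fixes P Q R :: "nat \<Rightarrow> nat \<Rightarrow> 'a::comm_ring_1"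
  shows "det (mat (k+m) (k+m) (\<lambda>(i,j). if i<k then (if j<k then P i j else 0)
            else (if j<k then Q i j else R (i-k) (j-k))))
         = det (mat k k (\<lambda>(i,j). P i j)) * det (mat m m (\<lambda>(i,j). R i j))"
proof (induction k arbitrary: P Q)
  case 0
  have "mat (0+m) (0+m) (\<lambda>(i,j). if i<0 then (if j<0 then P i j else 0)
            else (if j<0 then Q i j else R (i-0) (j-0))) = mat m m (\<lambda>(i,j). R i j)"
    by (intro eq_matI) auto
  then show ?case by simp
next
  case (Suc k)
  define X where "X = mat (Suc k+m) (Suc k+m) (\<lambda>(i,j). if i<Suc k then (if j<Suc k then P i j else 0)
            else (if j<Suc k then Q i j else R (i-Suc k) (j-Suc k)))"
  define Pm where "Pm = mat (Suc k) (Suc k) (\<lambda>(i,j). P i j)"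
  define Rm where "Rm = mat m m (\<lambda>(i,j). R i j)"
  have X: "X \<in> carrier_mat (Suc k+m) (Suc k+m)" unfolding X_def by simp
  have Pm: "Pm \<in> carrier_mat (Suc k) (Suc k)" unfolding Pm_def by simp
  have "det X = (\<Sum>j<Suc k+m. X $$ (0,j) * cofactor X 0 j)"
    by (rule laplace_expansion_row[OF X]) simp
  also have "\<dots> = (\<Sum>j<Suc k. X $$ (0,j) * cofactor X 0 j)"
    by (rule sum.mono_neutral_right) (auto simp: X_def)
  also have "\<dots> = (\<Sum>j<Suc k. Pm $$ (0,j) * cofactor Pm 0 j * det Rm)"
  proof (rule sum.cong[OF refl])
    fix j assume j: "j \<in> {..<Suc k}"
    define P' where "P' = (\<lambda>i j'. P (Suc i) (if j'<j then j' else Suc j'))"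
    define Q' where "Q' = (\<lambda>i j'. Q (Suc i) (if j'<j then j' else Suc j'))"
    have "mat_delete X 0 j = mat (k+m) (k+m) (\<lambda>(i,j'). if i<k then (if j'<k then P' i j' else 0)
            else (if j'<k then Q' i j' else R (i-k) (j'-k)))"
      using j unfolding X_def P'_def Q'_def mat_delete_def
      by (intro eq_matI) (auto simp: Suc_diff_le)
    hence "det (mat_delete X 0 j) = det (mat k k (\<lambda>(i,j). P' i j)) * det Rm"
      using Suc.IH unfolding Rm_def by simp
    moreover have "mat k k (\<lambda>(i,j). P' i j) = mat_delete Pm 0 j"
      unfolding Pm_def P'_def mat_delete_def using j by (intro eq_matI) auto
    ultimately show "X $$ (0,j) * cofactor X 0 j = Pm $$ (0,j) * cofactor Pm 0 j * det Rm"
      using j unfolding cofactor_def by (simp add: X_def Pm_def)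
  qed
  also have "\<dots> = det Pm * det Rm"
    by (simp only: laplace_expansion_row[OF Pm, of 0] sum_distrib_right)
  finally show ?case unfolding X_def Pm_def Rm_def .
qed

lemma det_block_diag:
  fixes F :: "nat \<Rightarrow> nat \<Rightarrow> nat \<Rightarrow> 'a::comm_ring_1"
  shows "det (mat (n*m) (n*m) (\<lambda>(r,c). if r div m = c div m then F (r div m) (r mod m) (c mod m) else 0))
         = (\<Prod>q<n. det (mat m m (\<lambda>(i,j). F q i j)))"
proof (cases "m = 0")
  case True
  then show ?thesis by simp
next
  case m: False
  show ?thesis
  proof (induction n arbitrary: F)
    case 0
    then show ?case by simp
  next
    case (Suc n)
    have "mat (Suc n*m) (Suc n*m) (\<lambda>(r,c). if r div m = c div m then F (r div m) (r mod m) (c mod m) else 0)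
      = mat (m+n*m) (m+n*m) (\<lambda>(i,j). if i<m then (if j<m then F 0 i j else 0)
            else (if j<m then 0 else
              (\<lambda>r c. if r div m = c div m then F (Suc (r div m)) (r mod m) (c mod m) else 0) (i-m) (j-m)))"
      using m by (intro eq_matI) (auto simp: le_div_geq le_mod_geq)
    hence "det (mat (Suc n*m) (Suc n*m) (\<lambda>(r,c). if r div m = c div m then F (r div m) (r mod m) (c mod m) else 0))
       = det (mat m m (\<lambda>(i,j). F 0 i j)) * det (mat (n*m) (n*m) (\<lambda>(r,c). if r div m = c div m then F (Suc (r div m)) (r mod m) (c mod m) else 0))"
      using det_block_lower[of m "n*m" "\<lambda>i j. F 0 i j" "\<lambda>i j. 0"] by simp
    also have "\<dots> = det (mat m m (\<lambda>(i,j). F 0 i j)) * (\<Prod>q<n. det (mat m m (\<lambda>(i,j). F (Suc q) i j)))"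
      using Suc.IH[of "\<lambda>q. F (Suc q)"] by simp
    also have "\<dots> = (\<Prod>q<Suc n. det (mat m m (\<lambda>(i,j). F q i j)))"
      by (simp only: prod.lessThan_Suc_shift)
    finally show ?case .
  qed
qed

lemma sign_involution:
  fixes p :: "'b \<Rightarrow> 'b"
  assumes "permutation p" "\<And>x. p (p x) = x" "card {x. p x \<noteq> x} = 2*k"
  shows "sign p = (-1)^k"
  using assms
proof (induction k arbitrary: p)
  case 0
  have "finite {x. p x \<noteq> x}" using 0(1) permutation by blast
  with 0(3) have "{x. p x \<noteq> x} = {}" by simp
  hence "p = id" by auto
  then show ?case by simp
next
  case (Suc k)
  have fin: "finite {x. p x \<noteq> x}" using Suc(2) permutation by blast
  have "{x. p x \<noteq> x} \<noteq> {}"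
  proof (rule notI)
    assume "{x. p x \<noteq> x} = {}"
    with Suc(4) show False by simp
  qed
  then obtain x where x: "p x \<noteq> x" by auto
  define y where "y = p x"
  have xy: "x \<noteq> y" "p y = x" using x Suc(3) unfolding y_def by auto
  define q where "q = transpose x y \<circ> p"
  have pz: "z \<noteq> x \<Longrightarrow> z \<noteq> y \<Longrightarrow> p z \<noteq> x \<and> p z \<noteq> y" for z
      using Suc(3)[of z] xy unfolding y_def by metis
  have qz: "q z = (if z = x \<or> z = y then z else p z)" for z
  proof -
    note pz[of z]
    then show ?thesis unfolding q_def using xy by (auto simp: y_def transpose_def)
  qed
  have perm_q: "permutation q" unfolding q_def
    by (intro permutation_compose permutation_swap_id Suc(2))
  have inv_q: "q (q z) = z" for z
  proof (cases "z = x \<or> z = y")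
    case True then show ?thesis using qz[of z] by simp
  next
    case False then show ?thesis using qz[of z] qz[of "p z"] pz[of z] Suc(3)[of z] by simp
  qed
  have set_q: "{z. q z \<noteq> z} = {z. p z \<noteq> z} - {x, y}"
    using qz by auto
  have "card {z. q z \<noteq> z} = 2*k"
    unfolding set_q using Suc(4) xy x fin by (subst card_Diff_subset) (auto simp: y_def)
  hence sq: "sign q = (-1)^k" using Suc.IH perm_q inv_q by blast
  have "p = transpose x y \<circ> q" unfolding q_def by (simp add: comp_assoc[symmetric])
  hence "sign p = sign (transpose x y) * sign q"
    using sign_compose[OF permutation_swap_id perm_q] by simp
  then show ?case using sq xy by (simp add: sign_swap_id)
qed

definition gt :: "nat \<Rightarrow> nat \<Rightarrow> nat" where
  "gt n r = (if r < n*n then (r mod n)*n + r div n else r)"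

lemma gt_facts:
  assumes r: "r < n*n"
  shows "gt n r < n*n" "gt n r mod n = r div n" "gt n r div n = r mod n"
proof -
  have n: "n > 0" using r by (cases n) auto
  have d: "r div n < n" using r by (simp add: less_mult_imp_div_less)
  have m: "r mod n < n" using n by simp
  have "(r mod n)*n + r div n < (r mod n)*n + n" using d by simp
  also have "\<dots> = Suc (r mod n) * n" by simp
  also have "\<dots> \<le> n*n" using m by (intro mult_right_mono) auto
  finally show "gt n r < n*n" using r by (simp add: gt_def)
  show "gt n r mod n = r div n" using r d by (simp add: gt_def)
  show "gt n r div n = r mod n" using r d n by (simp add: gt_def)
qed

lemma gt_invol: "gt n (gt n r) = r"
proof (cases "r < n*n")
  case True
  then show ?thesis using gt_facts[OF True] by (simp add: gt_def[of n "gt n r"])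
next
  case False
  then show ?thesis by (simp add: gt_def)
qed

lemma gt_permutes: "gt n permutes {0..<n*n}"
  unfolding permutes_def
proof (intro conjI allI impI)
  fix x assume "x \<notin> {0..<n*n}" then show "gt n x = x" by (simp add: gt_def)
next
  fix y show "\<exists>!x. gt n x = y"
    by (rule ex1I[of _ "gt n y"]) (auto simp: gt_invol dest: arg_cong[of _ _ "gt n"])
qed

lemma parity_aux: "(-1::int) ^ (n*(n-1) div 2) = (-1) ^ (n div 2)"
proof (induction n rule: nat_less_induct)
  case (1 n)
  show ?case
  proof (cases "n < 2")
    case True
    then show ?thesis by (cases n) auto
  next
    case False
    then obtain m where n: "n = Suc (Suc m)" by (metis add_2_eq_Suc le_add_diff_inverse not_less)
    have e: "n*(n-1) div 2 = m*(m-1) div 2 + (2*m+1)"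
    proof -
      have "n*(n-1) = m*(m-1) + 2*(2*m+1)" unfolding n by (cases m) (auto simp: algebra_simps)
      moreover have "even (m*(m-1))" by (cases "even m") auto
      ultimately show ?thesis by auto
    qed
    have "n div 2 = m div 2 + 1" unfolding n by simp
    moreover have "(-1::int)^(m*(m-1) div 2) = (-1)^(m div 2)" using 1 n by simp
    ultimately show ?thesis unfolding e by (simp add: power_add)
  qed
qed

lemma sign_gt: "sign (gt n) = (-1::int) ^ (n div 2)"
proof -
  have nf: "{r. gt n r \<noteq> r} = {0..<n*n} - (\<lambda>j. j*n+j) ` {..<n}"
  proof (intro equalityI subsetI)
    fix r assume "r \<in> {r. gt n r \<noteq> r}"
    then have r: "r < n*n" "gt n r \<noteq> r" by (auto simp: gt_def split: if_splits)
    have "r \<notin> (\<lambda>j. j*n+j) ` {..<n}"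
    proof
      assume "r \<in> (\<lambda>j. j*n+j) ` {..<n}"
      then obtain j where j: "j < n" "r = j*n+j" by auto
      then show False using r by (simp add: gt_def)
    qed
    then show "r \<in> {0..<n*n} - (\<lambda>j. j*n+j) ` {..<n}" using r by auto
  next
    fix r assume r: "r \<in> {0..<n*n} - (\<lambda>j. j*n+j) ` {..<n}"
    then have rl: "r < n*n" by auto
    have "gt n r \<noteq> r"
    proof
      assume e: "gt n r = r"
      then have "r mod n = r div n" using gt_facts(2)[OF rl] by simp
      then have "r = (r div n)*n + r div n" by (metis mult.commute div_mult_mod_eq)
      moreover have "r div n < n" using rl by (simp add: less_mult_imp_div_less)
      ultimately show False using r by auto
    qed
    then show "r \<in> {r. gt n r \<noteq> r}" by simp
  qed
  have inj: "inj_on (\<lambda>j. j*n+j) {..<n}"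
    by (intro inj_onI) (metis add_mult_distrib mult_Suc_right mult.commute nat_mult_eq_cancel1 add.commute
        mult_cancel2 Suc_eq_plus1 zero_less_Suc)
  have sub: "(\<lambda>j. j*n+j) ` {..<n} \<subseteq> {0..<n*n}"
  proof
    fix r assume "r \<in> (\<lambda>j. j*n+j) ` {..<n}"
    then obtain j where j: "j < n" "r = j*n+j" by auto
    have "j*n + j < j*n + n" using j by simp
    also have "\<dots> = Suc j * n" by simp
    also have "\<dots> \<le> n*n" using j by (intro mult_right_mono) auto
    finally show "r \<in> {0..<n*n}" using j by simp
  qed
  have "card {r. gt n r \<noteq> r} = n*n - n"
    unfolding nf by (subst card_Diff_subset) (use sub inj in \<open>auto simp: card_image\<close>)
  also have "\<dots> = 2 * (n*(n-1) div 2)" by (simp add: diff_mult_distrib2)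
  finally have c: "card {r. gt n r \<noteq> r} = 2 * (n*(n-1) div 2)" .
  have "permutation (gt n)" using gt_permutes permutation_permutes by blast
  then have "sign (gt n) = (-1) ^ (n*(n-1) div 2)"
    using sign_involution[OF _ gt_invol c] by blast
  then show ?thesis using parity_aux by simp
qed


lemma mult_diag_index:
  fixes X :: "'a::comm_ring_1 mat"
  assumes X: "X \<in> carrier_mat k n" and p: "p < k" and q: "q < n"
  shows "(X * mat n n (\<lambda>(i,j). if i = j then d i else 0)) $$ (p,q) = X $$ (p,q) * d q"
proof -
  have "(X * mat n n (\<lambda>(i,j). if i = j then d i else 0)) $$ (p,q)
     = (\<Sum>k\<in>{0..<n}. X $$ (p,k) * (if k = q then d k else 0))"
    using X p q by (simp add: scalar_prod_def)
  also have "\<dots> = (\<Sum>k\<in>{0..<n}. if k = q then X $$ (p,q) * d q else 0)"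
    by (rule sum.cong) auto
  also have "\<dots> = X $$ (p,q) * d q" using q by (subst sum.delta) auto
  finally show ?thesis .
qed

lemma det_diag:
  "det (mat n n (\<lambda>(i,j). if i = j then d i else (0::'a::comm_ring_1))) = (\<Prod>i<n. d i)"
proof -
  have "det (mat n n (\<lambda>(i,j). if i = j then d i else (0::'a))) = prod_list (diag_mat (mat n n (\<lambda>(i,j). if i = j then d i else (0::'a))))"
    by (rule det_upper_triangular) auto
  also have "diag_mat (mat n n (\<lambda>(i,j). if i = j then d i else (0::'a))) = map d [0..<n]"
    unfolding diag_mat_def by (intro map_cong) auto
  also have "prod_list (map d [0..<n]) = (\<Prod>i<n. d i)"
    by (simp add: prod.distinct_set_conv_list[symmetric] atLeast0LessThan)
  finally show ?thesis .
qed

lemma vdm_Suc: "vdm (Suc n) x = (\<Prod>q<n. x (Suc q) - x 0) * vdm n (\<lambda>q. x (Suc q))"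
proof -
  have "vdm (Suc n) x = (\<Prod>t<n. \<Prod>s<Suc t. x (Suc t) - x s)"
    unfolding vdm_def by (simp add: prod.lessThan_Suc_shift del: prod.lessThan_Suc)
  also have "\<dots> = (\<Prod>t<n. (x (Suc t) - x 0) * (\<Prod>s<t. x (Suc t) - x (Suc s)))"
    by (simp add: prod.lessThan_Suc_shift del: prod.lessThan_Suc)
  also have "\<dots> = (\<Prod>q<n. x (Suc q) - x 0) * vdm n (\<lambda>q. x (Suc q))"
    unfolding vdm_def by (simp add: prod.distrib)
  finally show ?thesis .
qed

lemma det_vandermonde:
  fixes x :: "nat \<Rightarrow> 'a::comm_ring_1"
  shows "det (mat n n (\<lambda>(i,q). x q ^ i)) = vdm n x"
proof (induction n arbitrary: x)
  case 0
  then show ?case by (simp add: vdm_def)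
next
  case (Suc n)
  define E where "E = mat (Suc n) (Suc n) (\<lambda>(i,k). if k = i then 1 else if Suc k = i then - x 0 else (0::'a))"
  define V where "V = mat (Suc n) (Suc n) (\<lambda>(i,q). x q ^ i)"
  have E: "E \<in> carrier_mat (Suc n) (Suc n)" and V: "V \<in> carrier_mat (Suc n) (Suc n)"
    unfolding E_def V_def by auto
  have detE: "det E = 1"
  proof -
    have "det E = prod_list (diag_mat E)"
      by (rule det_lower_triangular[OF _ E]) (auto simp: E_def)
    also have "diag_mat E = map (\<lambda>_. 1) [0..<Suc n]"
      unfolding diag_mat_def by (intro map_cong) (auto simp: E_def)
    finally show ?thesis by (simp add: map_replicate_const)
  qed
  define W where "W = E * V"
  have W: "W \<in> carrier_mat (Suc n) (Suc n)" unfolding W_def using E V by auto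
  have Wij: "W $$ (i,q) = (if i = 0 then 1 else x q ^ i - x 0 * x q ^ (i - 1))"
    if i: "i < Suc n" and q: "q < Suc n" for i q
  proof -
    have "W $$ (i,q) = (\<Sum>k\<in>{0..<Suc n}. E $$ (i,k) * V $$ (k,q))"
      unfolding W_def using i q E V by (simp add: scalar_prod_def)
    also have "\<dots> = (\<Sum>k\<in>{0..<Suc n}. (if k = i then x q ^ i else 0) + (if Suc k = i then - x 0 * x q ^ k else 0))"
      using i q by (intro sum.cong) (auto simp: E_def V_def)
    also have "\<dots> = x q ^ i + (\<Sum>k\<in>{0..<Suc n}. (if Suc k = i then - x 0 * x q ^ k else 0))"
      using i by (simp add: sum.distrib sum.delta)
    also have "(\<Sum>k\<in>{0..<Suc n}. (if Suc k = i then - x 0 * x q ^ k else 0)) = (if i = 0 then 0 else - x 0 * x q ^ (i - 1))"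
    proof (cases i)
      case 0 then show ?thesis by simp
    next
      case (Suc i')
      then have "(\<Sum>k\<in>{0..<Suc n}. (if Suc k = i then - x 0 * x q ^ k else 0)) = (\<Sum>k\<in>{0..<Suc n}. (if k = i' then - x 0 * x q ^ k else 0))"
        by (intro sum.cong) auto
      also have "\<dots> = - x 0 * x q ^ i'" using Suc i by (subst sum.delta) auto
      finally show ?thesis using Suc by simp
    qed
    finally show ?thesis by auto
  qed
  have "det V = det W" unfolding W_def using det_mult[OF E V] detE by simp
  also have "det W = (\<Sum>i<Suc n. W $$ (i,0) * cofactor W i 0)"
    by (rule laplace_expansion_column[OF W]) simp
  also have "\<dots> = det (mat_delete W 0 0)"
    by (simp only: sum.lessThan_Suc_shift) (simp add: Wij cofactor_def power_Suc)
  also have "mat_delete W 0 0 = mat n n (\<lambda>(i,q). x (Suc q) ^ i) * mat n n (\<lambda>(i,j). if i = j then x (Suc i) - x 0 else 0)"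
  proof (rule eq_matI)
    fix i q assume i: "i < dim_row (mat n n (\<lambda>(i,q). x (Suc q) ^ i) * mat n n (\<lambda>(i,j). if i = j then x (Suc i) - x 0 else 0))"
      and q: "q < dim_col (mat n n (\<lambda>(i,q). x (Suc q) ^ i) * mat n n (\<lambda>(i,j). if i = j then x (Suc i) - x 0 else 0))"
    then have i: "i < n" and q: "q < n" by auto
    have "mat_delete W 0 0 $$ (i,q) = W $$ (Suc i, Suc q)"
      using i q W by (simp add: mat_delete_def)
    also have "\<dots> = x (Suc q) ^ i * (x (Suc q) - x 0)"
      using i q by (simp add: Wij algebra_simps)
    also have "\<dots> = (mat n n (\<lambda>(i,q). x (Suc q) ^ i) * mat n n (\<lambda>(i,j). if i = j then x (Suc i) - x 0 else 0)) $$ (i,q)"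
      by (subst mult_diag_index[of _ n n]) (use i q in auto)
    finally show "mat_delete W 0 0 $$ (i,q) = (mat n n (\<lambda>(i,q). x (Suc q) ^ i) * mat n n (\<lambda>(i,j). if i = j then x (Suc i) - x 0 else 0)) $$ (i,q)" .
  qed (use W in auto)
  also have "det \<dots> = vdm n (\<lambda>q. x (Suc q)) * (\<Prod>q<n. x (Suc q) - x 0)"
    by (subst det_mult[of _ n]) (auto simp: Suc.IH det_diag)
  finally show ?case unfolding V_def vdm_Suc by (simp add: ac_simps)
qed

lemma diagm_pow: "diagm n b ^\<^sub>m i = diagm n (\<lambda>k. b k ^ i)"
proof (induction i)
  case 0
  then show ?case unfolding diagm_def by (intro eq_matI) auto
next
  case (Suc i)
  have "diagm n b ^\<^sub>m Suc i = diagm n (\<lambda>k. b k ^ i) * diagm n b" using Suc by simp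
  also have "\<dots> = diagm n (\<lambda>k. b k ^ Suc i)"
  proof (rule eq_matI)
    fix p q assume "p < dim_row (diagm n (\<lambda>k. b k ^ Suc i))" "q < dim_col (diagm n (\<lambda>k. b k ^ Suc i))"
    then have p: "p < n" and q: "q < n" by (auto simp: diagm_def)
    show "(diagm n (\<lambda>k. b k ^ i) * diagm n b) $$ (p,q) = diagm n (\<lambda>k. b k ^ Suc i) $$ (p,q)"
      unfolding diagm_def[of n b]
      by (subst mult_diag_index[of _ n n]) (use p q in \<open>auto simp: diagm_def\<close>)
  qed (auto simp: diagm_def)
  finally show ?case .
qed

theorem mainTheorem3:
  fixes A :: "'a::comm_ring_1 mat" and b :: "nat \<Rightarrow> 'a" and n :: nat
  assumes "A \<in> carrier_mat n n"
  shows "T n A (diagm n b) = (-1) ^ (n div 2) * Delta n A * vdm n b ^ n"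
proof -
  note A = assms
  define N where "N = n*n"
  define W where "W = mat N N (\<lambda>(r,c). if r mod n = c mod n then b (c div n) ^ (r div n) else 0)"
  define F where "F = (\<lambda>q i j. (A ^\<^sub>m j) $$ (i,q))"
  define D where "D = mat N N (\<lambda>(r,c). if r div n = c div n then F (r div n) (r mod n) (c mod n) else 0)"
  have W: "W \<in> carrier_mat N N" and D: "D \<in> carrier_mat N N" unfolding W_def D_def by auto
  have WD: "W * D \<in> carrier_mat N N" using W D by auto
  have Bp: "(A ^\<^sub>m j * diagm n b ^\<^sub>m i) $$ (p,q) = (A ^\<^sub>m j) $$ (p,q) * b q ^ i"
    if "p < n" "q < n" for i j p q
    unfolding diagm_pow unfolding diagm_def
    by (rule mult_diag_index) (use that A in auto)
  have eq: "blockM n A (diagm n b) = mat N N (\<lambda>(r,c). (W * D) $$ (r, gt n c))"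
  proof (rule eq_matI)
    fix r c assume "r < dim_row (mat N N (\<lambda>(r,c). (W * D) $$ (r, gt n c)))"
      "c < dim_col (mat N N (\<lambda>(r,c). (W * D) $$ (r, gt n c)))"
    then have r: "r < N" and c: "c < N" by auto
    have n: "n > 0" using r N_def by (cases n) auto
    define p where "p = r mod n"
    define i where "i = r div n"
    define j where "j = c div n"
    define q where "q = c mod n"
    have p: "p < n" and q: "q < n" using n by (auto simp: p_def q_def)
    have gc: "gt n c < N" "gt n c mod n = j" "gt n c div n = q"
      using gt_facts[of c n] c by (auto simp: N_def j_def q_def)
    have key: "k mod n = p \<and> k div n = q \<longleftrightarrow> k = q*n + p" for k
    proof
      assume "k mod n = p \<and> k div n = q" then show "k = q*n + p" by (metis div_mult_mod_eq)
    next
      assume "k = q*n + p" then show "k mod n = p \<and> k div n = q" using p by simp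
    qed
    have "(W * D) $$ (r, gt n c) = (\<Sum>k\<in>{0..<N}. W $$ (r,k) * D $$ (k, gt n c))"
      using r gc W D by (simp add: scalar_prod_def)
    also have "\<dots> = (\<Sum>k\<in>{0..<N}. if k = q*n + p then b q ^ i * (A ^\<^sub>m j) $$ (p,q) else 0)"
    proof (rule sum.cong[OF refl])
      fix k assume k: "k \<in> {0..<N}"
      show "W $$ (r,k) * D $$ (k, gt n c) = (if k = q*n + p then b q ^ i * (A ^\<^sub>m j) $$ (p,q) else 0)"
        using k r gc key[of k] unfolding W_def D_def F_def
        by (auto simp: p_def i_def)
    qed
    also have "\<dots> = b q ^ i * (A ^\<^sub>m j) $$ (p,q)"
    proof -
      have "q*n + p < q*n + n" using p by simp
      also have "\<dots> = Suc q * n" by simp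
      also have "\<dots> \<le> n*n" using q by (intro mult_right_mono) auto
      finally have "q*n + p < N" unfolding N_def .
      then show ?thesis by (subst sum.delta) auto
    qed
    also have "\<dots> = blockM n A (diagm n b) $$ (r,c)"
      unfolding blockM_def using r c Bp[OF p q, of j i] by (simp add: N_def p_def q_def i_def j_def)
    finally show "blockM n A (diagm n b) $$ (r,c) = mat N N (\<lambda>(r,c). (W * D) $$ (r, gt n c)) $$ (r,c)"
      using r c by simp
  qed (auto simp: blockM_def N_def)
  have "T n A (diagm n b) = signof (gt n) * det (W * D)"
    unfolding T_def eq by (rule det_permute_cols[OF WD]) (simp add: N_def gt_permutes)
  also have "\<dots> = (-1) ^ (n div 2) * (det W * det D)"
    using det_mult[OF W D] sign_gt[of n] by simp
  also have "det D = Delta n A"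
    unfolding D_def N_def det_block_diag unfolding Delta_def Delta_t_def Mt_def F_def by simp
  also have "det W = vdm n b ^ n"
  proof -
    have "det W = det (mat N N (\<lambda>(r,c). W $$ (gt n r, gt n c)))"
      by (rule det_conj_perm[OF W, symmetric]) (simp add: N_def gt_permutes)
    also have "mat N N (\<lambda>(r,c). W $$ (gt n r, gt n c))
       = mat (n*n) (n*n) (\<lambda>(r,c). if r div n = c div n then (\<lambda>q i j. b j ^ i) (r div n) (r mod n) (c mod n) else 0)"
      by (intro eq_matI) (auto simp: W_def N_def gt_facts)
    also have "det \<dots> = (\<Prod>q<n. vdm n b)"
      using det_block_diag[of n n "\<lambda>q i j. b j ^ i"] by (simp add: det_vandermonde)
    finally show ?thesis by simp
  qed
  finally show ?thesis by (simp add: ac_simps)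
qed

end
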